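(* Let $r_I>r_0>0$, $v_1,v_2>0$, $w_V>0$ and $w_I$ be real numbers with $\frac{r_0 w_V v_2}{r_I(v_1+v_2)}<w_I<\frac{w_V v_2}{v_1+v_2}$. Let $n\ge 1$ be an integer and $l_1,\dots,l_{n-1}\ge 0$ be real numbers. Consider the optimization problem (P) described in the context. Then the optimal value of (P) satisfies $$\left(\sum_{i=1}^{n}Y_i\right)^*\ge \sum_{i=1}^{n-1}\min\left\{\frac{l_i}{v_2}w_I,\frac{2r_0}{v_1+v_2}w_V\right\}+\frac{2r_0}{v_1+v_2}w_V .$$ Moreover, this lower bound is attained by the feasible point $$D_i^*=\frac{\min\{l_i,2r_I\}}{v_2}w_I,\quad Y_i^*=\min\left\{\frac{l_i w_I}{v_2},\frac{2r_0 w_V}{v_1+v_2}\right\}\ (i=1,\dots,n-1),\qquad D_n^*=\frac{2r_I}{v_2}w_I,\quad Y_n^*=\frac{2r_0}{v_1+v_2}w_V .$$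
   Context: Model: a vehicle of interest (VoI) moving at speed $v_1$ receives data from $n$ "helper" vehicles moving in the opposite direction at speed $v_2$; consecutive helpers are at distances $l_1,\dots,l_{n-1}$; helpers download from an infrastructure point of radio range $r_I$ at rate $w_I$, and deliver to the VoI over vehicle links of range $r_0$ at rate $w_V$. $D_i$ is the amount of data helper $i$ receives from the infrastructure and $Y_i$ the amount it delivers to the VoI. The optimization problem (P), over real variables $D_1,\dots,D_n,Y_1,\dots,Y_n$, is: maximize $\sum_{i=1}^n Y_i$ subject to (i) $0\le D_i\le \frac{2r_I}{v_2}w_I$ for $i=1,\dots,n$; (ii) $\sum_{i=k_1}^{k_2}D_i\le \frac{\sum_{i=k_1}^{k_2-1}\min\{l_i,2r_I\}+2r_I}{v_2}w_I$ for all $1\le k_1\le k_2\le n$; (iii) $0\le Y_i\le \frac{2r_0}{v_1+v_2}w_V$ for $i=1,\dots,n$; (iv) $Y_i\le D_i$ for $i=1,\dots,n$; (v) $\sum_{i=k_1}^{k_2}Y_i\le \frac{\sum_{i=k_1}^{k_2-1}\min\{l_i,2r_0\}+2r_0}{v_1+v_2}w_V$ for all $1\le k_1\le k_2\le n$. (Empty sums are zero.) *)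

theory Defs
  imports Complex_Main
begin

text \<open>Feasibility for problem (P). Helpers and inter-helper distances are indexed from 1:
  D i, Y i for i = 1..n, and l i for i = 1..n-1. Values outside these ranges are irrelevant.\<close>

definition feasibleP ::
  "real \<Rightarrow> real \<Rightarrow> real \<Rightarrow> real \<Rightarrow> real \<Rightarrow> real \<Rightarrow> nat \<Rightarrow> (nat \<Rightarrow> real)
   \<Rightarrow> (nat \<Rightarrow> real) \<Rightarrow> (nat \<Rightarrow> real) \<Rightarrow> bool" where
  "feasibleP rI r0 v1 v2 wI wV n l D Y \<longleftrightarrow>
     (\<forall>i\<in>{1..n}. 0 \<le> D i \<and> D i \<le> 2 * rI / v2 * wI) \<and>
     (\<forall>k1 k2. 1 \<le> k1 \<and> k1 \<le> k2 \<and> k2 \<le> n \<longrightarrow>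
        (\<Sum>i=k1..k2. D i) \<le> ((\<Sum>i=k1..<k2. min (l i) (2 * rI)) + 2 * rI) / v2 * wI) \<and>
     (\<forall>i\<in>{1..n}. 0 \<le> Y i \<and> Y i \<le> 2 * r0 / (v1 + v2) * wV) \<and>
     (\<forall>i\<in>{1..n}. Y i \<le> D i) \<and>
     (\<forall>k1 k2. 1 \<le> k1 \<and> k1 \<le> k2 \<and> k2 \<le> n \<longrightarrow>
        (\<Sum>i=k1..k2. Y i) \<le> ((\<Sum>i=k1..<k2. min (l i) (2 * r0)) + 2 * r0) / (v1 + v2) * wV)"

end

theory Submission
  imports Defs
begin

lemma sum_split_last: "(k1::nat) \<le> k2 \<Longrightarrow> (\<Sum>i=k1..k2. f i) = (\<Sum>i=k1..<k2. f i) + (f k2 :: real)"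
  by (simp add: atLeastLessThanSuc_atLeastAtMost[symmetric])

theorem theorem3:
  fixes rI r0 v1 v2 wI wV :: real and n :: nat and l :: "nat \<Rightarrow> real"
  assumes "rI > r0" "r0 > 0" "v1 > 0" "v2 > 0" "wV > 0"
    and "r0 * wV * v2 / (rI * (v1 + v2)) < wI" "wI < wV * v2 / (v1 + v2)"
    and "n \<ge> 1"
    and "\<forall>i\<in>{1..n-1}. l i \<ge> 0"
  defines "Dst \<equiv> (\<lambda>i. if i = n then 2 * rI / v2 * wI else min (l i) (2 * rI) / v2 * wI)"
    and "Yst \<equiv> (\<lambda>i. if i = n then 2 * r0 / (v1 + v2) * wV
                    else min (l i * wI / v2) (2 * r0 * wV / (v1 + v2)))"
    and "bound \<equiv> (\<Sum>i=1..n-1. min (l i / v2 * wI) (2 * r0 / (v1 + v2) * wV))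
                  + 2 * r0 / (v1 + v2) * wV"
  shows "Sup {\<Sum>i=1..n. Y i | D Y. feasibleP rI r0 v1 v2 wI wV n l D Y} \<ge> bound
         \<and> feasibleP rI r0 v1 v2 wI wV n l Dst Yst
         \<and> (\<Sum>i=1..n. Yst i) = bound"
proof -
  define a where "a = wI / v2"
  define b where "b = wV / (v1 + v2)"
  have bpos: "b > 0" using assms unfolding b_def by simp
  have rab: "r0 * b < rI * a"
  proof -
    have "r0 * wV * v2 / (rI * (v1 + v2)) = r0 * b * v2 / rI" using assms unfolding b_def by (simp add: field_simps)
    hence "r0 * b * v2 / rI < wI" using assms(6) by simp
    hence "r0 * b * v2 < wI * rI" using assms by (simp add: divide_less_eq mult.commute)
    hence "r0 * b * v2 < rI * a * v2" using assms unfolding a_def by (simp add: field_simps)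
    thus ?thesis using assms by simp
  qed
  have apos: "a > 0"
  proof -
    have "r0 * b > 0" using assms bpos by simp
    hence "rI * a > 0" using rab by linarith
    moreover have "rI > 0" using assms by linarith
    ultimately show ?thesis by (simp add: zero_less_mult_iff)
  qed
  have alb: "a < b"
  proof -
    have "wI < b * v2" using assms(7) unfolding b_def by (simp add: field_simps)
    thus ?thesis unfolding a_def using assms by (simp add: divide_less_eq mult.commute)
  qed
  have rI0: "rI > 0" using assms by linarith
  have Dst': "Dst = (\<lambda>i. if i = n then 2 * rI * a else min (l i) (2 * rI) * a)"
    unfolding Dst_def a_def by (auto simp: field_simps)
  have Yst': "Yst = (\<lambda>i. if i = n then 2 * r0 * b else min (l i * a) (2 * r0 * b))"
    unfolding Yst_def a_def b_def by (auto simp: field_simps)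
  have lnn: "\<And>i. 1 \<le> i \<Longrightarrow> i < n \<Longrightarrow> l i \<ge> 0" using assms(9) by auto
  have feas: "feasibleP rI r0 v1 v2 wI wV n l Dst Yst"
  proof -
    have c1: "\<forall>i\<in>{1..n}. 0 \<le> Dst i \<and> Dst i \<le> 2 * rI / v2 * wI"
    proof
      fix i assume i: "i \<in> {1..n}"
      show "0 \<le> Dst i \<and> Dst i \<le> 2 * rI / v2 * wI"
      proof (cases "i = n")
        case True
        have "2 * rI / v2 * wI = 2*rI*a" by (simp add: a_def)
        thus ?thesis using True apos rI0 unfolding Dst' by simp
      next
        case False
        hence "l i \<ge> 0" using i lnn by auto
        hence "0 \<le> min (l i) (2*rI) * a" "min (l i) (2*rI) * a \<le> 2*rI*a"
          using apos rI0 by (auto intro: mult_right_mono)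
        thus ?thesis using False unfolding Dst' a_def by simp
      qed
    qed
    have c2: "\<forall>k1 k2. 1 \<le> k1 \<and> k1 \<le> k2 \<and> k2 \<le> n \<longrightarrow>
        (\<Sum>i=k1..k2. Dst i) \<le> ((\<Sum>i=k1..<k2. min (l i) (2 * rI)) + 2 * rI) / v2 * wI"
    proof (intro allI impI)
      fix k1 k2 assume k: "1 \<le> k1 \<and> k1 \<le> k2 \<and> k2 \<le> n"
      have "(\<Sum>i=k1..<k2. Dst i) = (\<Sum>i=k1..<k2. min (l i) (2 * rI) * a)"
        using k by (intro sum.cong) (auto simp: Dst')
      also have "\<dots> = (\<Sum>i=k1..<k2. min (l i) (2 * rI)) * a" by (simp add: sum_distrib_right)
      finally have s: "(\<Sum>i=k1..<k2. Dst i) = (\<Sum>i=k1..<k2. min (l i) (2 * rI)) * a" .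
      have "Dst k2 \<le> 2 * rI * a" using apos rI0 by (auto simp: Dst' intro: mult_right_mono)
      hence "(\<Sum>i=k1..k2. Dst i) \<le> (\<Sum>i=k1..<k2. min (l i) (2 * rI)) * a + 2 * rI * a"
        using k s sum_split_last[of k1 k2 Dst] by simp
      also have "\<dots> = ((\<Sum>i=k1..<k2. min (l i) (2 * rI)) + 2 * rI) / v2 * wI"
        unfolding a_def using assms(4) by (simp add: field_simps)
      finally show "(\<Sum>i=k1..k2. Dst i) \<le> ((\<Sum>i=k1..<k2. min (l i) (2 * rI)) + 2 * rI) / v2 * wI" .
    qed
    have c3: "\<forall>i\<in>{1..n}. 0 \<le> Yst i \<and> Yst i \<le> 2 * r0 / (v1 + v2) * wV"
    proof
      fix i assume i: "i \<in> {1..n}"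
      have e: "2 * r0 / (v1 + v2) * wV = 2 * r0 * b" unfolding b_def by simp
      show "0 \<le> Yst i \<and> Yst i \<le> 2 * r0 / (v1 + v2) * wV"
      proof (cases "i = n")
        case True thus ?thesis using bpos assms(2) unfolding Yst' e by simp
      next
        case False
        hence "l i \<ge> 0" using i lnn by auto
        thus ?thesis using False bpos apos assms(2) unfolding Yst' e by simp
      qed
    qed
    have c4: "\<forall>i\<in>{1..n}. Yst i \<le> Dst i"
    proof
      fix i assume i: "i \<in> {1..n}"
      show "Yst i \<le> Dst i"
      proof (cases "i = n")
        case True thus ?thesis using rab unfolding Yst' Dst' by simp
      next
        case False
        have "min (l i * a) (2 * r0 * b) \<le> min (l i) (2 * rI) * a"
        proof (cases "l i \<le> 2 * rI")
          case True
          hence "min (l i) (2 * rI) * a = l i * a" by simp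
          moreover have "min (l i * a) (2 * r0 * b) \<le> l i * a" by simp
          ultimately show ?thesis by linarith
        next
          case False
          hence "min (l i) (2 * rI) * a = 2 * rI * a" by simp
          moreover have "min (l i * a) (2 * r0 * b) \<le> 2 * r0 * b" by simp
          ultimately show ?thesis using rab by linarith
        qed
        thus ?thesis using False unfolding Yst' Dst' by simp
      qed
    qed
    have c5: "\<forall>k1 k2. 1 \<le> k1 \<and> k1 \<le> k2 \<and> k2 \<le> n \<longrightarrow>
        (\<Sum>i=k1..k2. Yst i) \<le> ((\<Sum>i=k1..<k2. min (l i) (2 * r0)) + 2 * r0) / (v1 + v2) * wV"
    proof (intro allI impI)
      fix k1 k2 assume k: "1 \<le> k1 \<and> k1 \<le> k2 \<and> k2 \<le> n"
      have "(\<Sum>i=k1..<k2. Yst i) \<le> (\<Sum>i=k1..<k2. min (l i) (2 * r0) * b)"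
      proof (rule sum_mono)
        fix i assume i: "i \<in> {k1..<k2}"
        hence "i \<noteq> n" "l i \<ge> 0" using k lnn by auto
        moreover have "l i * a \<le> l i * b" using \<open>l i \<ge> 0\<close> alb by (simp add: mult_left_mono)
        moreover have "min (l i * a) (2 * r0 * b) \<le> min (l i) (2 * r0) * b"
        proof (cases "l i \<le> 2 * r0")
          case True
          hence "min (l i) (2 * r0) * b = l i * b" by simp
          moreover have "min (l i * a) (2 * r0 * b) \<le> l i * a" by simp
          ultimately show ?thesis using \<open>l i * a \<le> l i * b\<close> by linarith
        next
          case False
          hence "min (l i) (2 * r0) * b = 2 * r0 * b" by simp
          moreover have "min (l i * a) (2 * r0 * b) \<le> 2 * r0 * b" by simp
          ultimately show ?thesis by linarith
        qed
        ultimately show "Yst i \<le> min (l i) (2 * r0) * b" unfolding Yst' by simp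
      qed
      also have "\<dots> = (\<Sum>i=k1..<k2. min (l i) (2 * r0)) * b" by (simp add: sum_distrib_right)
      finally have s: "(\<Sum>i=k1..<k2. Yst i) \<le> (\<Sum>i=k1..<k2. min (l i) (2 * r0)) * b" .
      have "Yst k2 \<le> 2 * r0 * b" by (simp add: Yst')
      hence "(\<Sum>i=k1..k2. Yst i) \<le> (\<Sum>i=k1..<k2. min (l i) (2 * r0)) * b + 2 * r0 * b"
        using k s sum_split_last[of k1 k2 Yst] by simp
      also have "\<dots> = ((\<Sum>i=k1..<k2. min (l i) (2 * r0)) + 2 * r0) * b"
        by (rule distrib_right[symmetric])
      also have "\<dots> = ((\<Sum>i=k1..<k2. min (l i) (2 * r0)) + 2 * r0) / (v1 + v2) * wV"
        unfolding b_def by simp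
      finally show "(\<Sum>i=k1..k2. Yst i) \<le> ((\<Sum>i=k1..<k2. min (l i) (2 * r0)) + 2 * r0) / (v1 + v2) * wV" .
    qed
    show ?thesis unfolding feasibleP_def using c1 c2 c3 c4 c5 by blast
  qed
  have sumY: "(\<Sum>i=1..n. Yst i) = bound"
  proof -
    have "(\<Sum>i=1..n. Yst i) = (\<Sum>i=1..<n. Yst i) + Yst n"
      using assms(8) sum_split_last[of 1 n Yst] by simp
    also have "(\<Sum>i=1..<n. Yst i) = (\<Sum>i=1..n-1. min (l i / v2 * wI) (2 * r0 / (v1 + v2) * wV))"
    proof -
      have "{1..<n} = {1..n-1}" using assms(8) by auto
      thus ?thesis unfolding Yst_def by (intro sum.cong) auto
    qed
    finally show ?thesis unfolding bound_def Yst_def by simp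
  qed
  let ?S = "{\<Sum>i=1..n. Y i | D Y. feasibleP rI r0 v1 v2 wI wV n l D Y}"
  have bdd: "bdd_above ?S"
  proof (rule bdd_aboveI)
    fix x assume "x \<in> ?S"
    then obtain D Y where x: "x = (\<Sum>i=1..n. Y i)" and f: "feasibleP rI r0 v1 v2 wI wV n l D Y" by blast
    from f have "(\<Sum>i=1..n. Y i) \<le> ((\<Sum>i=1..<n. min (l i) (2 * r0)) + 2 * r0) / (v1 + v2) * wV"
      unfolding feasibleP_def using assms(8) by blast
    thus "x \<le> ((\<Sum>i=1..<n. min (l i) (2 * r0)) + 2 * r0) / (v1 + v2) * wV" using x by simp
  qed
  have "bound \<in> ?S" using feas sumY by force
  hence "bound \<le> Sup ?S" using bdd by (rule cSup_upper)
  thus ?thesis using feas sumY by blast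
qed

end
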